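(* Let $a,m\in\mathbb Z^+$ and let $\psi:\mathbb Z\to\mathbb Z$ be a function such that for every $k\in\mathbb Z$ and every $j\in\{1,\dots,a\}$, $$\psi(k)\equiv\psi(-k)\pmod{3^a}\quad\text{and}\quad \psi(k+3^j)\equiv\psi(k)\pmod{3^j}.$$ Then $$\sum_{k=1}^{3^am-1}q^{\psi(k)}\left(\frac{k}{3}\right)\begin{bmatrix}2\cdot 3^am\\k\end{bmatrix}_q\equiv 0\pmod{[3^a]_q^2}.$$ In particular, $$\sum_{k=1}^{3^am-1}\left(\frac{k}{3}\right)\begin{bmatrix}2\cdot 3^am\\k\end{bmatrix}_q\equiv 0\pmod{[3^a]_q^2}.$$
   Context: $\left(\frac{k}{3}\right)$ is the Legendre symbol: $0$ if $3\mid k$, $1$ if $k\equiv1\pmod 3$, $-1$ if $k\equiv 2\pmod 3$. For $n\in\mathbb N$, $[n]_q=\frac{1-q^n}{1-q}=\sum_{0\le j<n}q^j$. For $n,k\in\mathbb N$ the $q$-binomial coefficient is $\begin{bmatrix}n\\k\end{bmatrix}_q=\frac{[n]_q[n-1]_q\cdots[n-k+1]_q}{[1]_q[2]_q\cdots[k]_q}$ if $0<k\le n$, equal to $1$ if $k=0$, and $0$ if $k>n$. Since $\psi$ may take negative values, the sum is a Laurent polynomial in $q$; the congruence means the sum equals $[3^a]_q^2$ times an element of $\mathbb Z[q,q^{-1}]$. *)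

theory Defs
  imports "HOL-Computational_Algebra.Computational_Algebra" "HOL-Number_Theory.Residues"
begin

definition qint :: "nat \<Rightarrow> int poly" where
  "qint n = (\<Sum>j<n. Polynomial.monom 1 j)"

definition qbinom :: "nat \<Rightarrow> nat \<Rightarrow> int poly" where
  "qbinom n k =
     (if k = 0 then 1
      else if k \<le> n then (\<Prod>i\<in>{n-k+1..n}. qint i) div (\<Prod>i\<in>{1..k}. qint i)
      else 0)"

definition poly_to_fls :: "int poly \<Rightarrow> int fls" where
  "poly_to_fls p = fps_to_fls (fps_of_poly p)"

definition laurent_poly :: "int fls \<Rightarrow> bool" where
  "laurent_poly f \<longleftrightarrow> finite {n. fls_nth f n \<noteq> 0}"

end

theory Submission
  imports Defs
begin


lemma qint_add: "qint (a + b) = qint a + Polynomial.monom 1 a * qint b"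
proof (induction b)
  case 0 then show ?case by (simp add: qint_def)
next
  case (Suc b)
  have "qint (a + Suc b) = qint (a+b) + Polynomial.monom 1 (a+b)" by (simp add: qint_def)
  also have "\<dots> = qint a + Polynomial.monom 1 a * (qint b + Polynomial.monom 1 b)"
    using Suc by (simp add: algebra_simps mult_monom)
  also have "qint b + Polynomial.monom 1 b = qint (Suc b)" by (simp add: qint_def)
  finally show ?case .
qed

lemma qint_Suc: "qint (Suc n) = qint n + Polynomial.monom 1 n" by (simp add: qint_def)

lemma poly_qint: "poly (qint n) 1 = int n"
  by (induction n) (simp_all add: qint_def poly_monom)

lemma qint_nz: "n > 0 \<Longrightarrow> qint n \<noteq> 0"
  using poly_qint[of n] by auto

definition U :: "nat \<Rightarrow> nat \<Rightarrow> int poly" where "U n k = (\<Prod>i<k. qint (n - i))"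
definition D :: "nat \<Rightarrow> int poly" where "D k = (\<Prod>i<k. qint (Suc i))"

fun gb :: "nat \<Rightarrow> nat \<Rightarrow> int poly" where
  "gb n 0 = 1" | "gb 0 (Suc k) = 0"
| "gb (Suc n) (Suc k) = gb n k + Polynomial.monom 1 (Suc k) * gb n (Suc k)"

lemma gb_zero: "n < k \<Longrightarrow> gb n k = 0"
  by (induction n k rule: gb.induct) auto

lemma D_nz: "D k \<noteq> 0" unfolding D_def by (auto simp: qint_nz)

lemma gb_prod: "gb n k * D k = U n k"
proof (induction n arbitrary: k)
  case 0 then show ?case by (cases k) (auto simp: D_def U_def qint_def)
next
  case (Suc n)
  have step: "gb (Suc n) (Suc k) * D (Suc k) = U (Suc n) (Suc k)" for k
  proof -
    have DS: "D (Suc k) = D k * qint (Suc k)" by (simp add: D_def)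
    have US: "U n (Suc k) = U n k * qint (n - k)" by (simp add: U_def)
    have US2: "U (Suc n) (Suc k) = qint (Suc n) * U n k"
      unfolding U_def by (subst prod.lessThan_Suc_shift) simp
    have "gb (Suc n) (Suc k) * D (Suc k) = gb n k * D k * qint (Suc k) + Polynomial.monom 1 (Suc k) * (gb n (Suc k) * D (Suc k))"
      by (simp add: DS algebra_simps)
    also have "\<dots> = U n k * qint (Suc k) + Polynomial.monom 1 (Suc k) * (U n k * qint (n - k))"
      using Suc.IH US by simp
    also have "\<dots> = U n k * (qint (Suc k) + Polynomial.monom 1 (Suc k) * qint (n - k))" by (simp add: algebra_simps)
    also have "\<dots> = U (Suc n) (Suc k)"
    proof (cases "k \<le> n")
      case True then show ?thesis using qint_add[of "Suc k" "n - k"] US2 by (simp add: mult.commute)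
    next
      case False
      then have "U n k = 0" unfolding U_def using False by (auto simp: qint_def intro!: bexI[of _ n])
      then show ?thesis using US2 by simp
    qed
    finally show ?thesis .
  qed
  show ?case using step by (cases k) (auto simp: D_def U_def)
qed

lemma U_alt: "k \<le> n \<Longrightarrow> U n k = (\<Prod>i\<in>{n-k+1..n}. qint i)"
  unfolding U_def
  by (rule prod.reindex_bij_witness[where i="\<lambda>i. n - i" and j="\<lambda>i. n - i"]) auto

lemma D_alt: "D k = (\<Prod>i\<in>{1..k}. qint i)"
  unfolding D_def
  by (rule prod.reindex_bij_witness[where i="\<lambda>i. i - 1" and j="\<lambda>i. Suc i"]) auto

lemma qbinom_gb: "qbinom n k = gb n k"
proof -
  consider "k = 0" | "0 < k" "k \<le> n" | "n < k" by linarith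
  then show ?thesis
  proof cases
    case 2
    then have "qbinom n k = U n k div D k" by (simp add: qbinom_def U_alt D_alt)
    also have "\<dots> = gb n k" by (simp add: gb_prod[symmetric] D_nz)
    finally show ?thesis .
  qed (auto simp: qbinom_def gb_zero)
qed

lemma gb_rec: "gb n (Suc k) * qint (Suc k) = gb n k * qint (n - k)"
proof -
  have "(gb n (Suc k) * qint (Suc k)) * D k = (gb n k * qint (n - k)) * D k"
    using gb_prod[of n "Suc k"] gb_prod[of n k]
    by (simp add: D_def U_def algebra_simps)
  then show ?thesis using D_nz[of k] by simp
qed



lemma sq_mod3: "(y::int)^2 mod 3 \<noteq> 2"
proof -
  have "y mod 3 \<in> {0,1,2}" by auto
  moreover have "y^2 mod 3 = (y mod 3)^2 mod 3" by (simp add: power_mod)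
  ultimately show ?thesis by auto
qed

lemma leg3: "Legendre x 3 = (if x mod 3 = 0 then 0 else if x mod 3 = 1 then 1 else -1)"
proof -
  have QR1: "QuadRes 3 x" if "x mod 3 = 1"
    unfolding QuadRes_def using that by (intro exI[of _ 1]) (simp add: cong_def)
  have QR2: "\<not> QuadRes 3 x" if "x mod 3 = 2"
    unfolding QuadRes_def cong_def using that sq_mod3 by metis
  have "x mod 3 \<in> {0,1,2}" by auto
  then show ?thesis unfolding Legendre_def using QR1 QR2 by (auto simp: cong_def)
qed



abbreviation mc :: "int poly \<Rightarrow> complex poly" where "mc \<equiv> map_poly of_int"

lemma mc_add: "mc (p + q) = mc p + mc q"
  by (intro poly_eqI) (simp add: coeff_map_poly)
lemma mc_mult: "mc (p * q) = mc p * mc q"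
  by (intro poly_eqI) (simp add: coeff_map_poly coeff_mult)
lemma mc_sum: "mc (\<Sum>i\<in>A. f i) = (\<Sum>i\<in>A. mc (f i))"
  by (induction A rule: infinite_finite_induct) (auto simp: mc_add)
lemma mc_prod: "mc (\<Prod>i\<in>A. f i) = (\<Prod>i\<in>A. mc (f i))"
  by (induction A rule: infinite_finite_induct) (auto simp: mc_mult)
lemma mc_power: "mc (p ^ n) = mc p ^ n"
  by (induction n) (auto simp: mc_mult)
lemma mc_monom: "mc (Polynomial.monom c n) = Polynomial.monom (of_int c) n"
  by (simp add: map_poly_monom)
lemma mc_const: "mc [:c:] = [:of_int c:]"
  by (simp add: monom_0[symmetric] map_poly_monom del: monom_0)
lemma mc_eq0: "mc p = 0 \<longleftrightarrow> p = 0"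
  by (simp add: map_poly_eq_0_iff)

lemma poly_mc_qint: "poly (mc (qint i)) z = (\<Sum>j<i. z ^ j)"
  by (simp add: qint_def mc_sum mc_monom poly_sum poly_monom)

locale rt =
  fixes z :: complex and d N :: nat
  assumes ord: "\<And>i. z ^ i = 1 \<longleftrightarrow> d dvd i" and d3: "3 dvd d" and dN: "d dvd N"
begin

definition w :: "nat \<Rightarrow> complex" where "w i = (\<Sum>j<i. z ^ j)"
definition Qc :: "nat \<Rightarrow> complex poly" where "Qc k = mc (gb N k)"
abbreviation L :: "complex poly" where "L \<equiv> [:-z, 1:]"
definition C :: "nat \<Rightarrow> complex poly" where "C k = Qc k div L"
definition c :: "nat \<Rightarrow> complex" where "c k = poly (C k) z"

lemma z1: "z \<noteq> 1"
  using ord[of 1] d3 by auto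

lemma w_mult: "w i * (1 - z) = 1 - z ^ i"
  unfolding w_def by (simp add: one_diff_power_eq mult.commute)

lemma w_zero_iff: "w i = 0 \<longleftrightarrow> d dvd i"
proof -
  have "w i = 0 \<longleftrightarrow> w i * (1 - z) = 0" using z1 by auto
  also have "\<dots> \<longleftrightarrow> z ^ i = 1" by (simp add: w_mult)
  finally show ?thesis using ord by simp
qed

lemma w_period: "w (i + d * t) = w i"
proof -
  have "z ^ (d * t) = 1" using ord by simp
  then have "w (i + d * t) * (1 - z) = w i * (1 - z)"
    by (simp add: w_mult power_add)
  then show ?thesis using z1 by simp
qed

lemma poly_qc: "poly (mc (qint i)) z = w i"
  by (simp add: poly_mc_qint w_def)

lemma Qc_rec: "Qc (Suc k) * mc (qint (Suc k)) = Qc k * mc (qint (N - k))"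
  unfolding Qc_def using gb_rec[of N k] by (metis mc_mult)

lemma Qc_root: "k < N \<Longrightarrow> \<not> d dvd k \<Longrightarrow> poly (Qc k) z = 0"
proof (induction k)
  case 0 then show ?case by simp
next
  case (Suc k)
  have "poly (Qc (Suc k)) z * w (Suc k) = poly (Qc k) z * w (N - k)"
    using arg_cong[OF Qc_rec[of k], of "\<lambda>p. poly p z"] by (simp add: poly_qc)
  moreover have "poly (Qc k) z * w (N - k) = 0"
  proof (cases "d dvd k")
    case True
    then have "d dvd N - k" using dN by (simp add: dvd_diff_nat)
    then show ?thesis by (simp add: w_zero_iff)
  next
    case False then show ?thesis using Suc by simp
  qed
  ultimately show ?case using Suc.prems by (simp add: w_zero_iff)
qed

lemma Qc_C: "k < N \<Longrightarrow> \<not> d dvd k \<Longrightarrow> Qc k = L * C k"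
  using Qc_root[of k] unfolding C_def
  by (metis dvd_mult_div_cancel poly_eq_0_iff_dvd)

lemma c_rec:
  assumes "Suc k < N" "\<not> d dvd k" "\<not> d dvd Suc k"
  shows "c (Suc k) * w (Suc k) = c k * w (N - k)"
proof -
  have "L * (C (Suc k) * mc (qint (Suc k))) = L * (C k * mc (qint (N - k)))"
  proof -
    have "Qc (Suc k) * mc (qint (Suc k)) = Qc k * mc (qint (N - k))" by (rule Qc_rec)
    moreover have "Qc k = L * C k" "Qc (Suc k) = L * C (Suc k)" using Qc_C assms by auto
    ultimately show ?thesis by (metis mult.assoc)
  qed
  moreover have "L \<noteq> 0" by simp
  ultimately have "C (Suc k) * mc (qint (Suc k)) = C k * mc (qint (N - k))"
    using mult_left_cancel by blast
  from arg_cong[OF this, of "\<lambda>p. poly p z"] show ?thesis by (simp add: c_def poly_qc)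
qed

lemma c_interval:
  assumes "k1 \<le> k2" "k2 < N" "\<And>i. k1 \<le> i \<Longrightarrow> i \<le> k2 \<Longrightarrow> \<not> d dvd i"
  shows "c k2 * (\<Prod>i\<in>{k1<..k2}. w i) = c k1 * (\<Prod>i\<in>{k1..<k2}. w (N - i))"
  using assms
proof (induction k2 rule: dec_induct)
  case base then show ?case by simp
next
  case (step k)
  have e1: "{k1<..Suc k} = insert (Suc k) {k1<..k}" using step by auto
  have e2: "{k1..<Suc k} = insert k {k1..<k}" using step by auto
  have "c (Suc k) * (\<Prod>i\<in>{k1<..Suc k}. w i) = (c (Suc k) * w (Suc k)) * (\<Prod>i\<in>{k1<..k}. w i)"
    by (simp add: e1 mult_ac)
  also have "\<dots> = w (N - k) * (c k * (\<Prod>i\<in>{k1<..k}. w i))"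
    using step.prems step.hyps by (subst c_rec) (auto simp: mult_ac)
  also have "\<dots> = w (N - k) * (c k1 * (\<Prod>i\<in>{k1..<k}. w (N - i)))"
    using step by simp
  also have "\<dots> = c k1 * (\<Prod>i\<in>{k1..<Suc k}. w (N - i))"
    by (simp add: e2 mult_ac)
  finally show ?case .
qed

lemma c_pair:
  assumes r: "0 < r" "2 * r < d" and s: "d * (2 * s + 1) \<le> N"
  shows "c (d * s + r) = c (d * s + (d - r))"
proof -
  define k1 where "k1 = d * s + r"
  define k2 where "k2 = d * s + (d - r)"
  have k12: "k1 \<le> k2" using r by (simp add: k1_def k2_def)
  have k2N: "k2 < N" using r s by (simp add: k2_def algebra_simps)
  have nd: "\<not> d dvd i" if h: "k1 \<le> i" "i \<le> k2" for i
  proof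
    assume "d dvd i"
    obtain u where u: "i = d * s + u" "r \<le> u" "u \<le> d - r"
      using h r by (intro that[of "i - d * s"]) (auto simp: k1_def k2_def)
    have "d dvd u" using \<open>d dvd i\<close> u(1) by (simp add: dvd_add_right_iff)
    moreover have "0 < u" "u < d" using u r by auto
    ultimately show False by (simp add: nat_dvd_not_less)
  qed
  have eq: "c k2 * (\<Prod>i\<in>{k1<..k2}. w i) = c k1 * (\<Prod>i\<in>{k1..<k2}. w (N - i))"
    by (rule c_interval[OF k12 k2N nd])
  obtain t where t: "N - k1 - k2 = d * t"
  proof -
    have "d dvd N - d * (2 * s + 1)" using dN by (simp add: dvd_diff_nat)
    moreover have "N - k1 - k2 = N - d * (2 * s + 1)" using r by (simp add: k1_def k2_def algebra_simps)
    ultimately show ?thesis using that by (auto simp: dvd_def)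
  qed
  have k12N: "k1 + k2 \<le> N" using r s by (simp add: k1_def k2_def algebra_simps)
  have "(\<Prod>i\<in>{k1..<k2}. w (N - i)) = (\<Prod>i\<in>{k1<..k2}. w i)"
  proof (rule prod.reindex_bij_witness[where i="\<lambda>j. k1 + k2 - j" and j="\<lambda>j. k1 + k2 - j"])
    fix a assume a: "a \<in> {k1..<k2}"
    have "N - a = (k1 + k2 - a) + d * t" using a t k12N by auto
    then show "w (k1 + k2 - a) = w (N - a)" by (simp add: w_period)
  qed auto
  moreover have "(\<Prod>i\<in>{k1<..k2}. w i) \<noteq> 0"
    using nd by (auto simp: w_zero_iff)
  ultimately have "c k2 = c k1" using eq by simp
  then show ?thesis by (simp add: k1_def k2_def)
qed

lemma zpow_cong: "[a = b] (mod d) \<Longrightarrow> z ^ a = z ^ b"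
proof -
  have "z ^ a = z ^ (a mod d)" for a
  proof -
    have "z ^ a = z ^ (a mod d) * (z ^ d) ^ (a div d)"
      by (metis mod_div_mult_eq mult.commute power_add power_mult)
    then show ?thesis using ord[of d] by simp
  qed
  then show "[a = b] (mod d) \<Longrightarrow> z ^ a = z ^ b" by (metis cong_def)
qed

end

locale rt2 = rt +
  fixes H :: nat and e :: "nat \<Rightarrow> nat"
  assumes NH: "N = 2 * H" and dH: "d dvd H" and dodd: "odd d"
    and econg: "\<And>k. k \<in> {1..H-1} \<Longrightarrow> \<not> 3 dvd k \<Longrightarrow>
                  [e (d * (k div d) + (d - k mod d)) = e k] (mod d)"
begin

definition sg :: "nat \<Rightarrow> nat" where
  "sg k = (if 3 dvd k then k else d * (k div d) + (d - k mod d))"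

definition f :: "nat \<Rightarrow> complex" where
  "f k = of_int (Legendre (int k) 3) * z ^ e k * c k"

lemma d_pos: "d > 0" using dodd by (cases d) auto

lemma sg_props:
  assumes k: "k \<in> {1..H-1}" and k3: "\<not> 3 dvd k"
  shows "sg k \<in> {1..H-1}" "\<not> 3 dvd sg k" "sg (sg k) = k" "f (sg k) = - f k"
proof -
  define s where "s = k div d"
  define r where "r = k mod d"
  have kk: "k = d * s + r" by (simp add: s_def r_def)
  have rd: "r < d" using d_pos by (simp add: r_def)
  have r0: "r \<noteq> 0"
  proof
    assume "r = 0"
    then have "d dvd k" by (simp add: r_def dvd_eq_mod_eq_0)
    then show False using d3 k3 by (meson dvd_trans)
  qed
  have sgk: "sg k = d * s + (d - r)" using k3 by (simp add: sg_def s_def r_def)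
  have "d * s < H" using k kk by auto
  then have "s < H div d" using dH d_pos
    by (metis dvd_mult_div_cancel mult_less_cancel1)
  then have ds1: "d * (s + 1) \<le> H" using dH d_pos
    by (metis Suc_eq_plus1 Suc_leI dvd_mult_div_cancel mult_le_mono2)
  show 1: "sg k \<in> {1..H-1}" using sgk rd r0 ds1 by (auto simp: algebra_simps)
  have s3: "3 dvd sg k \<longleftrightarrow> 3 dvd k"
  proof -
    have "3 dvd sg k \<longleftrightarrow> 3 dvd (d - r)" using sgk d3 by (simp add: dvd_add_right_iff)
    also have "\<dots> \<longleftrightarrow> 3 dvd r" using d3 rd by (metis dvd_diff_nat less_imp_le_nat diff_diff_cancel)
    also have "\<dots> \<longleftrightarrow> 3 dvd k" using kk d3 by (simp add: dvd_add_right_iff)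
    finally show ?thesis .
  qed
  show 2: "\<not> 3 dvd sg k" using s3 k3 by simp
  have e: "sg k = (d - r) + d * s" using sgk by simp
  have divs: "sg k div d = s" "sg k mod d = d - r"
    unfolding e using rd r0 d_pos
    by (simp_all only: div_mult_self2 mod_mult_self2 gr_implies_not0 not_False_eq_True) simp_all
  show "sg (sg k) = k" using 2 divs rd by (simp add: sg_def kk)
  have csg: "c (sg k) = c k"
  proof (cases "2 * r < d")
    case True
    have "d * (2 * s + 1) \<le> N" using ds1 NH by (simp add: algebra_simps)
    then show ?thesis using c_pair[of r s] True r0 sgk kk by simp
  next
    case False
    then have "2 * (d - r) < d" using dodd by presburger
    moreover have "d * (2 * s + 1) \<le> N" using ds1 NH by (simp add: algebra_simps)
    ultimately have "c (d * s + (d - r)) = c (d * s + (d - (d - r)))"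
      using c_pair[of "d - r" s] rd by simp
    then show ?thesis using sgk kk rd by simp
  qed
  have ez: "z ^ e (sg k) = z ^ e k" using econg[OF k k3] k3 by (simp add: zpow_cong sg_def)
  have "(int (sg k) + int k) mod 3 = 0"
  proof -
    have "sg k + k = d * (2 * s + 1)" using sgk kk rd by (simp add: algebra_simps)
    then have "3 dvd sg k + k" using d3 by simp
    then show ?thesis by presburger
  qed
  then have "Legendre (int (sg k)) 3 = - Legendre (int k) 3"
    using k3 2 unfolding leg3 by presburger
  then show "f (sg k) = - f k" unfolding f_def using ez csg by simp
qed

lemma f_sum: "(\<Sum>k\<in>{1..H-1}. f k) = 0"
proof -
  let ?K = "{1..H-1}"
  have f3: "f k = 0" if "3 dvd k" for k
  proof -
    have "int k mod 3 = 0" using that by presburger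
    then show ?thesis by (simp add: f_def leg3)
  qed
  have sgK0: "sg k \<in> ?K \<and> sg (sg k) = k \<and> f (sg k) = - f k" if "k \<in> ?K" for k
  proof (cases "3 dvd k")
    case True then show ?thesis using that f3 by (simp add: sg_def)
  next
    case False then show ?thesis using sg_props[OF that False] by simp
  qed
  have sgK: "sg k \<in> ?K" "sg (sg k) = k" "f (sg k) = - f k" if "k \<in> ?K" for k
    using sgK0[OF that] by auto
  have "(\<Sum>k\<in>?K. f k) = (\<Sum>k\<in>?K. f (sg k))"
    by (rule sum.reindex_bij_witness[where i=sg and j=sg]) (metis sgK)+
  also have "\<dots> = - (\<Sum>k\<in>?K. f k)" by (simp add: sgK sum_negf)
  finally show ?thesis by simp
qed

lemma L2_dvd:
  "L ^ 2 dvd (\<Sum>k\<in>{1..H-1}. Polynomial.smult (of_int (Legendre (int k) 3)) (Polynomial.monom 1 (e k) * Qc k))"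
proof -
  define W where "W = (\<Sum>k\<in>{1..H-1}. Polynomial.smult (of_int (Legendre (int k) 3)) (Polynomial.monom 1 (e k) * C k))"
  have trm: "Polynomial.smult (of_int (Legendre (int k) 3)) (Polynomial.monom 1 (e k) * Qc k)
      = L * Polynomial.smult (of_int (Legendre (int k) 3)) (Polynomial.monom 1 (e k) * C k)"
    if k: "k \<in> {1..H-1}" for k
  proof (cases "3 dvd k")
    case True
    then have "int k mod 3 = 0" by presburger
    then show ?thesis by (simp add: leg3)
  next
    case False
    then have "\<not> d dvd k" using d3 by (meson dvd_trans)
    moreover have "k < N" using k NH by auto
    ultimately have "Qc k = L * C k" by (rule Qc_C[rotated])
    then show ?thesis by (metis mult_smult_right mult.left_commute)
  qed
  have PW: "(\<Sum>k\<in>{1..H-1}. Polynomial.smult (of_int (Legendre (int k) 3)) (Polynomial.monom 1 (e k) * Qc k)) = L * W"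
    unfolding W_def by (simp add: sum_distrib_left trm)
  have "poly W z = (\<Sum>k\<in>{1..H-1}. f k)"
    unfolding W_def f_def c_def by (simp add: poly_sum poly_monom mult_ac)
  then have "poly W z = 0" using f_sum by simp
  then have "L dvd W" by (simp add: poly_eq_0_iff_dvd)
  then have "L * L dvd L * W" by (rule mult_dvd_mono[OF dvd_refl])
  then show ?thesis by (simp only: PW power2_eq_square)
qed

end


lemma cpoly_dvd:
  fixes R P :: "complex poly"
  assumes R0: "R \<noteq> 0" and lc: "lead_coeff R = 1"
    and ord: "\<And>z. poly R z = 0 \<Longrightarrow> Polynomial.order z R \<le> Polynomial.order z P"
  shows "R dvd P"
proof (cases "P = 0")
  case True then show ?thesis by simp
next
  case False
  let ?ZR = "{z. poly R z = 0}" and ?ZP = "{z. poly P z = 0}"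
  have fin: "finite ?ZP" using False by (rule poly_roots_finite)
  have sub: "?ZR \<subseteq> ?ZP"
  proof
    fix z assume "z \<in> ?ZR"
    then have "Polynomial.order z R \<noteq> 0" using R0 by (simp add: order_root)
    then have "Polynomial.order z P \<noteq> 0" using ord \<open>z \<in> ?ZR\<close> by fastforce
    then show "z \<in> ?ZP" by (simp add: order_root)
  qed
  have "R = (\<Prod>z\<in>?ZR. [:-z, 1:] ^ Polynomial.order z R)"
    using complex_poly_decompose[of R] lc by simp
  also have "\<dots> dvd (\<Prod>z\<in>?ZP. [:-z, 1:] ^ Polynomial.order z P)"
    by (rule prod_dvd_prod_subset2[OF fin sub]) (auto intro: le_imp_power_dvd ord)
  also have "\<dots> dvd Polynomial.smult (lead_coeff P) (\<Prod>z\<in>?ZP. [:-z, 1:] ^ Polynomial.order z P)"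
    using False by (simp add: dvd_smult)
  also have "\<dots> = P" by (rule complex_poly_decompose)
  finally show ?thesis .
qed

lemma qint_X: "qint n * [:-1, 1:] = Polynomial.monom 1 n - 1"
proof (induction n)
  case 0 then show ?case by (simp add: qint_def)
next
  case (Suc n)
  have x: "[:-1, 1:] = Polynomial.monom (1::int) 1 - 1" by (simp add: monom_Suc one_pCons)
  have y: "Polynomial.monom 1 n * [:-1, 1:] = Polynomial.monom 1 (Suc n) - Polynomial.monom (1::int) n"
    unfolding x right_diff_distrib mult_monom by simp
  have "qint (Suc n) * [:-1, 1:] = qint n * [:-1, 1:] + Polynomial.monom 1 n * [:-1, 1:]"
    by (simp only: qint_Suc distrib_right)
  then show ?case unfolding y Suc by simp
qed

lemma qint_lead: "degree (qint (Suc n)) = n \<and> lead_coeff (qint (Suc n)) = 1"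
proof (induction n)
  case 0 then show ?case by (simp add: qint_def)
next
  case (Suc n)
  have e: "qint (Suc (Suc n)) = qint (Suc n) + Polynomial.monom 1 (Suc n)" by (rule qint_Suc)
  have dg: "degree (qint (Suc (Suc n))) = Suc n"
    unfolding e using Suc by (subst degree_add_eq_right) (auto simp: degree_monom_eq)
  have "Polynomial.coeff (qint (Suc n)) (Suc n) = 0" using Suc by (simp add: coeff_eq_0)
  then show ?case using dg by (simp add: e)
qed

lemma order_qint_le1:
  assumes "n > 0"
  shows "Polynomial.order z (mc (qint n)) \<le> 1"
proof -
  let ?T = "Polynomial.monom (1::complex) n - 1"
  have T: "mc (qint n) * [:-1, 1:] = ?T"
  proof -
    have "mc (qint n * [:-1, 1:]) = mc (Polynomial.monom 1 n - 1)" by (simp only: qint_X)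
    moreover have "mc [:-1, 1:] = [:-1, 1:]" by (simp add: map_poly_pCons)
    moreover have "mc (Polynomial.monom 1 n - 1) = Polynomial.monom 1 n - 1"
      by (intro poly_eqI) (simp add: coeff_map_poly coeff_monom)
    ultimately show ?thesis by (simp only: mc_mult)
  qed
  have T0: "?T \<noteq> 0"
  proof
    assume "?T = 0"
    then have "Polynomial.coeff ?T n = 0" by simp
    then show False using assms by simp
  qed
  have "rsquarefree ?T"
    unfolding rsquarefree_roots
  proof (intro allI notI)
    fix a assume h: "poly ?T a = 0 \<and> poly (pderiv ?T) a = 0"
    then have "a ^ n = 1" by (simp add: poly_monom)
    then have "a \<noteq> 0" using assms by (metis power_0_left zero_neq_one gr_implies_not0)
    moreover have "poly (pderiv ?T) a = of_nat n * a ^ (n - 1)"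
      by (simp add: pderiv_diff pderiv_monom poly_monom)
    ultimately show False using h assms by simp
  qed
  then have "Polynomial.order z ?T \<le> 1" unfolding rsquarefree_def by (metis le_refl zero_le)
  moreover have "Polynomial.order z (mc (qint n)) \<le> Polynomial.order z ?T"
    by (rule dvd_imp_order_le[OF T0]) (metis T dvd_triv_left)
  ultimately show ?thesis by simp
qed

lemma int_dvd_transfer:
  fixes p q :: "int poly"
  assumes lc: "lead_coeff p = 1" and dv: "mc p dvd mc q"
  shows "p dvd q"
proof -
  have p0: "p \<noteq> 0" using lc by auto
  obtain qq r where pd: "pseudo_divmod q p = (qq, r)" by (cases "pseudo_divmod q p")
  from pseudo_divmod[OF p0 pd] lc have eq: "q = p * qq + r" and dr: "r = 0 \<or> degree r < degree p"
    by auto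
  have "mc q = mc p * mc qq + mc r" using eq by (simp add: mc_add mc_mult)
  then have "mc p dvd mc r" using dv by (metis dvd_add_right_iff dvd_triv_left)
  have dm: "degree (mc x) = degree x" for x by (rule degree_map_poly) simp
  have "r = 0"
  proof (rule ccontr)
    assume "r \<noteq> 0"
    then have "mc r \<noteq> 0" by (simp add: mc_eq0)
    with \<open>mc p dvd mc r\<close> have "degree (mc p) \<le> degree (mc r)" by (rule dvd_imp_degree_le)
    then show False using dr \<open>r \<noteq> 0\<close> by (simp add: dm)
  qed
  then show ?thesis using eq by simp
qed



lemma mc_smult: "mc (Polynomial.smult c p) = Polynomial.smult (of_int c) (mc p)"
  by (intro poly_eqI) (simp add: coeff_map_poly)

lemma root_case:
  fixes a m :: nat and \<psi> :: "int \<Rightarrow> int" and M0 :: nat and z :: complex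
  assumes a: "a > 0" and m: "m > 0"
    and hyp: "\<And>k j. j \<in> {1..a} \<Longrightarrow>
           [\<psi> k = \<psi> (-k)] (mod (3 ^ a)) \<and> [\<psi> (k + 3 ^ j) = \<psi> k] (mod (3 ^ j))"
    and M0: "\<And>k. k \<le> 2 * 3 ^ a * m \<Longrightarrow> 0 \<le> \<psi> (int k) + int M0"
    and root: "poly (mc (qint (3 ^ a))) z = 0"
  shows "[:-z, 1:] ^ 2 dvd (\<Sum>k\<in>{1..3 ^ a * m - 1}. Polynomial.smult (of_int (Legendre (int k) 3))
            (Polynomial.monom 1 (nat (\<psi> (int k) + int M0)) * mc (gb (2 * 3 ^ a * m) k)))"
proof -
  define n :: nat where "n = 3 ^ a"
  define H where "H = n * m"
  define N where "N = 2 * H"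
  define e where "e k = nat (\<psi> (int k) + int M0)" for k
  have n0: "n > 0" by (simp add: n_def)
  have sum0: "(\<Sum>j<n. z ^ j) = 0" using root by (simp add: poly_mc_qint n_def)
  have zn: "z ^ n = 1"
    using one_diff_power_eq[of z n] sum0 by simp
  have z1: "z \<noteq> 1"
  proof
    assume "z = 1" then show False using sum0 n0 by simp
  qed
  define d where "d = (LEAST i. 0 < i \<and> z ^ i = 1)"
  have dex: "0 < d \<and> z ^ d = 1" unfolding d_def
    by (rule LeastI[of _ n]) (use n0 zn in simp)
  have ord: "z ^ i = 1 \<longleftrightarrow> d dvd i" for i
  proof
    assume "d dvd i"
    then obtain q where "i = d * q" by (auto simp: dvd_def)
    then show "z ^ i = 1" using dex by (simp add: power_mult)
  next
    assume zi: "z ^ i = 1"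
    have "z ^ i = z ^ (i mod d) * (z ^ d) ^ (i div d)"
      by (metis mod_div_mult_eq mult.commute power_add power_mult)
    then have zm: "z ^ (i mod d) = 1" using zi dex by simp
    show "d dvd i"
    proof (rule ccontr)
      assume "\<not> d dvd i"
      then have "0 < i mod d" by (simp add: dvd_eq_mod_eq_0)
      then have "d \<le> i mod d" using zm Least_le[of "\<lambda>i. 0 < i \<and> z ^ i = 1" "i mod d"]
        by (simp only: d_def[symmetric])
      moreover have "i mod d < d" using dex by simp
      ultimately show False by simp
    qed
  qed
  have dn: "d dvd n" using ord zn by simp
  then obtain j where j: "j \<le> a" "d = 3 ^ j"
    unfolding n_def by (auto simp: divides_primepow_nat)
  have j0: "j \<noteq> 0"
  proof
    assume "j = 0" then have "d = 1" using j by simp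
    then show False using ord[of 1] z1 by simp
  qed
  have d3: "3 dvd d" using j j0 by simp
  have dodd: "odd d" using j by simp
  have dH: "d dvd H" using dn by (simp add: H_def)
  have dN: "d dvd N" using dH by (simp add: N_def)
  have hj: "[\<psi> x = \<psi> (-x)] (mod int d)" "[\<psi> (x + int d) = \<psi> x] (mod int d)" for x
  proof -
    have ja: "j \<in> {1..a}" using j j0 by simp
    have "(int d) dvd 3 ^ a" using j by (simp add: le_imp_power_dvd)
    then show "[\<psi> x = \<psi> (-x)] (mod int d)" using hyp[OF ja, of x] cong_dvd_modulus by blast
    show "[\<psi> (x + int d) = \<psi> x] (mod int d)" using hyp[OF ja, of x] j by simp
  qed
  have per: "[\<psi> (x + int d * int t) = \<psi> x] (mod int d)" for x t
  proof (induction t)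
    case 0 then show ?case by simp
  next
    case (Suc t)
    have "[\<psi> (x + int d * int (Suc t)) = \<psi> (x + int d * int t)] (mod int d)"
      using hj(2)[of "x + int d * int t"] by (simp add: algebra_simps)
    then show ?case using Suc cong_trans by blast
  qed
  have econg: "[e (d * (k div d) + (d - k mod d)) = e k] (mod d)"
    if k: "k \<in> {1..H-1}" "\<not> 3 dvd k" for k
  proof -
    define s where "s = k div d"
    define r where "r = k mod d"
    have rd: "r < d" using dex by (simp add: r_def)
    have kk: "k = d * s + r" by (simp add: s_def r_def)
    have i1: "int (d * s + (d - r)) = (int d - int r) + int d * int s" using rd by simp
    have "[\<psi> (int (d * s + (d - r))) = \<psi> (int d - int r)] (mod int d)"
      unfolding i1 by (rule per)
    also have "[\<psi> (int d - int r) = \<psi> (int r - int d)] (mod int d)"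
      using hj(1)[of "int d - int r"] by simp
    also have "[\<psi> (int r - int d) = \<psi> (int r)] (mod int d)"
      using hj(2)[of "int r - int d"] by (simp add: cong_sym)
    also have "[\<psi> (int r) = \<psi> (int k)] (mod int d)"
      using per[of "int r" s] by (simp add: kk cong_sym algebra_simps)
    finally have c1: "[\<psi> (int (d * s + (d - r))) = \<psi> (int k)] (mod int d)" .
    have b1: "d * s + (d - r) \<le> 2 * 3 ^ a * m"
    proof -
      have "d * s + (d - r) \<le> k + d" using kk by simp
      also have "\<dots> \<le> H + n" using k dn n0 by (auto dest: dvd_imp_le)
      also have "\<dots> \<le> 2 * 3 ^ a * m" using m by (simp add: H_def n_def)
      finally show ?thesis .
    qed
    have b2: "k \<le> 2 * 3 ^ a * m"
    proof -
      have "k \<le> 3 ^ a * m" using k by (simp add: H_def n_def, linarith)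
      also have "\<dots> \<le> 2 * 3 ^ a * m" by simp
      finally show ?thesis .
    qed
    have "[int (e (d * s + (d - r))) = int (e k)] (mod int d)"
      unfolding e_def using M0[OF b1] M0[OF b2] c1 by (simp add: cong_add_rcancel)
    then show ?thesis by (simp add: cong_int_iff s_def r_def)
  qed
  interpret rt2 z d N H e
  proof
    show "\<And>i. z ^ i = 1 \<longleftrightarrow> d dvd i" by (rule ord)
  qed (use d3 dN dH dodd econg in \<open>auto simp: N_def\<close>)
  show ?thesis using L2_dvd unfolding Qc_def by (simp add: N_def H_def n_def e_def mult.assoc)
qed


lemma main_int:
  fixes a m :: nat and \<psi> :: "int \<Rightarrow> int" and M0 :: nat
  assumes a: "a > 0" and m: "m > 0"
    and hyp: "\<And>k j. j \<in> {1..a} \<Longrightarrow>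
           [\<psi> k = \<psi> (-k)] (mod (3 ^ a)) \<and> [\<psi> (k + 3 ^ j) = \<psi> k] (mod (3 ^ j))"
    and M0: "\<And>k. k \<le> 2 * 3 ^ a * m \<Longrightarrow> 0 \<le> \<psi> (int k) + int M0"
  shows "qint (3 ^ a) ^ 2 dvd (\<Sum>k\<in>{1..3 ^ a * m - 1}. Polynomial.smult (Legendre (int k) 3)
            (Polynomial.monom 1 (nat (\<psi> (int k) + int M0)) * qbinom (2 * 3 ^ a * m) k))"
    (is "?Q ^ 2 dvd ?P")
proof (rule int_dvd_transfer)
  have n1: "3 ^ a = Suc (3 ^ a - 1)" by simp
  have lq: "lead_coeff ?Q = 1" using qint_lead[of "3 ^ a - 1"] n1 by metis
  then show "lead_coeff (?Q ^ 2) = 1" by (simp add: lead_coeff_power)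
  let ?R = "mc ?Q ^ 2"
  have mP: "mc ?P = (\<Sum>k\<in>{1..3 ^ a * m - 1}. Polynomial.smult (of_int (Legendre (int k) 3))
            (Polynomial.monom 1 (nat (\<psi> (int k) + int M0)) * mc (gb (2 * 3 ^ a * m) k)))"
    by (simp add: mc_sum mc_smult mc_mult mc_monom qbinom_gb)
  have Q0: "mc ?Q \<noteq> 0" by (simp add: mc_eq0 qint_nz)
  have dm: "degree (mc x) = degree x" for x by (rule degree_map_poly) simp
  have lR: "lead_coeff (mc ?Q) = 1" using lq by (simp add: dm coeff_map_poly)
  have "?R dvd mc ?P"
  proof (cases "mc ?P = 0")
    case True then show ?thesis by simp
  next
    case False
    show ?thesis
    proof (rule cpoly_dvd)
      show "?R \<noteq> 0" using Q0 by simp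
      show "lead_coeff ?R = 1" using lR by (simp add: lead_coeff_power)
      fix z assume "poly ?R z = 0"
      then have rz: "poly (mc ?Q) z = 0" by simp
      have "Polynomial.order z ?R = Polynomial.order z (mc ?Q) + Polynomial.order z (mc ?Q)"
        using Q0 by (simp add: power2_eq_square order_mult)
      also have "\<dots> \<le> 2" using order_qint_le1[of "3 ^ a" z] by simp
      also have "2 \<le> Polynomial.order z (mc ?P)"
      proof -
        have "[:-z, 1:] ^ 2 dvd mc ?P" unfolding mP by (rule root_case[OF a m hyp M0 rz])
        then show ?thesis using False by (simp add: order_divides)
      qed
      finally show "Polynomial.order z ?R \<le> Polynomial.order z (mc ?P)" .
    qed
  qed
  then show "mc (?Q ^ 2) dvd mc ?P" by (simp add: mc_power)
qed



lemma ptf_add: "poly_to_fls (p + q) = poly_to_fls p + poly_to_fls q"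
  by (simp add: poly_to_fls_def fps_of_poly_add)
lemma ptf_mult: "poly_to_fls (p * q) = poly_to_fls p * poly_to_fls q"
  by (simp add: poly_to_fls_def fps_of_poly_mult fls_times_fps_to_fls)
lemma ptf_0 [simp]: "poly_to_fls 0 = 0" by (simp add: poly_to_fls_def)
lemma ptf_1 [simp]: "poly_to_fls 1 = 1" by (simp add: poly_to_fls_def)
lemma ptf_sum: "poly_to_fls (\<Sum>i\<in>A. f i) = (\<Sum>i\<in>A. poly_to_fls (f i))"
  by (induction A rule: infinite_finite_induct) (auto simp: ptf_add)
lemma ptf_power: "poly_to_fls (p ^ n) = poly_to_fls p ^ n"
  by (induction n) (auto simp: ptf_mult)
lemma ptf_smult: "poly_to_fls (Polynomial.smult c p) = of_int c * poly_to_fls p"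
proof -
  have "Polynomial.smult c p = of_int c * p" by (simp add: of_int_poly)
  moreover have "poly_to_fls (of_int c) = of_int c"
    by (simp add: poly_to_fls_def of_int_poly fps_of_poly_const flip: fps_to_fls_of_int fps_of_int)
  ultimately show ?thesis by (simp add: ptf_mult)
qed
lemma ptf_monom: "poly_to_fls (Polynomial.monom 1 e) = fls_X_intpow (int e)"
  by (simp add: poly_to_fls_def fps_of_poly_monom' fps_to_fls_power fls_X_power_conv_shift_1)

lemma laurent_shift: "laurent_poly (fls_X_intpow (- int M0) * poly_to_fls G)"
proof -
  have "{n. fls_nth (fls_X_intpow (- int M0) * poly_to_fls G) n \<noteq> 0} \<subseteq> {- int M0 .. int (degree G)}"
  proof
    fix n assume "n \<in> {n. fls_nth (fls_X_intpow (- int M0) * poly_to_fls G) n \<noteq> 0}"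
    then have h: "fls_nth (poly_to_fls G) (n + int M0) \<noteq> 0"
      using fls_X_intpow_times_conv_shift(1)[of "- int M0" "poly_to_fls G"] by simp
    then have "0 \<le> n + int M0" by (auto simp: poly_to_fls_def split: if_splits)
    moreover have "Polynomial.coeff G (nat (n + int M0)) \<noteq> 0"
      using h calculation by (simp add: poly_to_fls_def)
    then have "nat (n + int M0) \<le> degree G" by (rule le_degree)
    ultimately show "n \<in> {- int M0 .. int (degree G)}" by simp
  qed
  then show ?thesis unfolding laurent_poly_def by (rule finite_subset) simp
qed


lemma gen:
  fixes a m :: nat and \<psi> :: "int \<Rightarrow> int"
  assumes a: "a > 0" and m: "m > 0"
    and hyp: "\<And>k j. j \<in> {1..a} \<Longrightarrow>
           [\<psi> k = \<psi> (-k)] (mod (3 ^ a)) \<and> [\<psi> (k + 3 ^ j) = \<psi> k] (mod (3 ^ j))"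
  shows "\<exists>g. laurent_poly g \<and>
            (\<Sum>k = 1..3 ^ a * m - 1.
               fls_X_intpow (\<psi> (int k)) * of_int (Legendre (int k) 3)
                 * poly_to_fls (qbinom (2 * 3 ^ a * m) k))
            = (poly_to_fls (qint (3 ^ a)))\<^sup>2 * g"
proof -
  define M0 where "M0 = (\<Sum>k\<le>2 * 3 ^ a * m. nat (- \<psi> (int k)))"
  have M0: "0 \<le> \<psi> (int k) + int M0" if "k \<le> 2 * 3 ^ a * m" for k
  proof -
    have "nat (- \<psi> (int k)) \<le> M0" unfolding M0_def
      by (rule member_le_sum) (use that in auto)
    then show ?thesis by linarith
  qed
  define e where "e k = nat (\<psi> (int k) + int M0)" for k
  obtain G where G: "(\<Sum>k\<in>{1..3 ^ a * m - 1}. Polynomial.smult (Legendre (int k) 3)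
            (Polynomial.monom 1 (e k) * qbinom (2 * 3 ^ a * m) k)) = qint (3 ^ a) ^ 2 * G"
    using main_int[OF a m hyp M0] unfolding e_def by (auto simp: dvd_def)
  have trm: "fls_X_intpow (\<psi> (int k)) * of_int (Legendre (int k) 3) * poly_to_fls (qbinom (2 * 3 ^ a * m) k)
      = fls_X_intpow (- int M0) * poly_to_fls (Polynomial.smult (Legendre (int k) 3)
            (Polynomial.monom 1 (e k) * qbinom (2 * 3 ^ a * m) k))"
    if "k \<in> {1..3 ^ a * m - 1}" for k
  proof -
    have "k \<le> 2 * 3 ^ a * m" using that by auto
    then have "int (e k) = \<psi> (int k) + int M0" using M0 by (simp add: e_def)
    then have "fls_X_intpow (\<psi> (int k)) = (fls_X_intpow (- int M0) :: int fls) * fls_X_intpow (int (e k))"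
      using fls_X_intpow_times_fls_X_intpow[of "- int M0" "int (e k)", where 'a=int] by simp
    then show ?thesis by (simp add: ptf_smult ptf_mult ptf_monom mult_ac)
  qed
  have "(\<Sum>k = 1..3 ^ a * m - 1.
               fls_X_intpow (\<psi> (int k)) * of_int (Legendre (int k) 3)
                 * poly_to_fls (qbinom (2 * 3 ^ a * m) k))
      = fls_X_intpow (- int M0) * poly_to_fls (\<Sum>k\<in>{1..3 ^ a * m - 1}. Polynomial.smult (Legendre (int k) 3)
            (Polynomial.monom 1 (e k) * qbinom (2 * 3 ^ a * m) k))"
    by (simp add: trm ptf_sum sum_distrib_left)
  also have "\<dots> = (poly_to_fls (qint (3 ^ a)))\<^sup>2 * (fls_X_intpow (- int M0) * poly_to_fls G)"
    unfolding G by (simp add: ptf_mult ptf_power mult_ac)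
  finally show ?thesis using laurent_shift by blast
qed

theorem theorem2p1:
  fixes a m :: nat and \<psi> :: "int \<Rightarrow> int"
  assumes "a > 0" and "m > 0"
    and "\<And>k j. j \<in> {1..a} \<Longrightarrow>
           [\<psi> k = \<psi> (-k)] (mod (3 ^ a)) \<and> [\<psi> (k + 3 ^ j) = \<psi> k] (mod (3 ^ j))"
  shows "(\<exists>g. laurent_poly g \<and>
            (\<Sum>k = 1..3 ^ a * m - 1.
               fls_X_intpow (\<psi> (int k)) * of_int (Legendre (int k) 3)
                 * poly_to_fls (qbinom (2 * 3 ^ a * m) k))
            = (poly_to_fls (qint (3 ^ a)))\<^sup>2 * g)
       \<and> (\<exists>g. laurent_poly g \<and>
            (\<Sum>k = 1..3 ^ a * m - 1.
               of_int (Legendre (int k) 3) * poly_to_fls (qbinom (2 * 3 ^ a * m) k))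
            = (poly_to_fls (qint (3 ^ a)))\<^sup>2 * g)"
proof
  show "\<exists>g. laurent_poly g \<and>
            (\<Sum>k = 1..3 ^ a * m - 1.
               fls_X_intpow (\<psi> (int k)) * of_int (Legendre (int k) 3)
                 * poly_to_fls (qbinom (2 * 3 ^ a * m) k))
            = (poly_to_fls (qint (3 ^ a)))\<^sup>2 * g"
    by (rule gen[OF assms])
  have "\<exists>g. laurent_poly g \<and>
            (\<Sum>k = 1..3 ^ a * m - 1.
               fls_X_intpow ((\<lambda>_. 0::int) (int k)) * of_int (Legendre (int k) 3)
                 * poly_to_fls (qbinom (2 * 3 ^ a * m) k))
            = (poly_to_fls (qint (3 ^ a)))\<^sup>2 * g"
    by (rule gen[OF assms(1,2)]) simp
  then show "\<exists>g. laurent_poly g \<and>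
            (\<Sum>k = 1..3 ^ a * m - 1.
               of_int (Legendre (int k) 3) * poly_to_fls (qbinom (2 * 3 ^ a * m) k))
            = (poly_to_fls (qint (3 ^ a)))\<^sup>2 * g"
    by simp
qed


end
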